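(* Let $(\Omega,\rho)$ be a metric space, $\beta\in(0,1]$, $\emptyset\ne A\subset\Omega$ and $f:\Omega\to[0,1]$ such that $\sup_{u\ne v\in A}\frac{|f(u)-f(v)|}{\rho(u,v)^\beta}<\infty$ and $\mathrm{diam}(A)<\infty$. Then the $\beta$-PMSE $F_A$ of $f$ from $A$ is well defined, takes values in $[0,1]$, and satisfies $\Lambda^\beta_{F_A}(x)\le\Lambda^\beta_f(x)$ for every $x\in\Omega$.
   Context: $\Lambda_g^\beta(x):=\sup_{y\in\Omega\setminus\{x\}}\frac{|g(x)-g(y)|}{\rho(x,y)^\beta}$. For $x\in\Omega$ and $u,v\in A$ (excluding the case $u=v=x$), set $R_x(u,v):=\frac{f(v)-f(u)}{\rho(x,v)^\beta+\rho(x,u)^\beta}$, $F_x(u,v):=f(u)+R_x(u,v)\rho(x,u)^\beta$, $R^*_x:=\sup_{u,v\in A}R_x(u,v)$, and for $0<\epsilon<R_x^*$, $W_x(\epsilon):=\{(u,v)\in A\times A: R_x(u,v)>R_x^*-\epsilon\}$, $\Phi_x(\epsilon):=\{F_x(u,v):(u,v)\in W_x(\epsilon)\}$. The $\beta$-pointwise minimal slope extension ($\beta$-PMSE) is $F_A(x):=\lim_{\epsilon\to0^+}\Phi_x(\epsilon)$, meaning the unique real number $r$ with $\sup_{\phi\in\Phi_x(\epsilon)}|\phi-r|\to0$ as $\epsilon\to0^+$ ("well defined" means this limit exists). In the degenerate case where $f$ is constant on $A$, $F_A$ is defined to be that constant. *)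

theory Defs
  imports "HOL-Analysis.Analysis"
begin

definition hslope :: "real \<Rightarrow> ('a::metric_space \<Rightarrow> real) \<Rightarrow> 'a \<Rightarrow> ereal" where
  "hslope \<beta> g x = (SUP y \<in> UNIV - {x}. ereal (\<bar>g x - g y\<bar> / dist x y powr \<beta>))"

definition adm_pairs :: "'a set \<Rightarrow> 'a \<Rightarrow> ('a \<times> 'a) set" where
  "adm_pairs A x = {(u, v). u \<in> A \<and> v \<in> A \<and> \<not> (u = x \<and> v = x)}"

definition Rx :: "real \<Rightarrow> ('a::metric_space \<Rightarrow> real) \<Rightarrow> 'a \<Rightarrow> 'a \<Rightarrow> 'a \<Rightarrow> real" where
  "Rx \<beta> f x u v = (f v - f u) / (dist x v powr \<beta> + dist x u powr \<beta>)"

definition Fx :: "real \<Rightarrow> ('a::metric_space \<Rightarrow> real) \<Rightarrow> 'a \<Rightarrow> 'a \<Rightarrow> 'a \<Rightarrow> real" where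
  "Fx \<beta> f x u v = f u + Rx \<beta> f x u v * dist x u powr \<beta>"

definition Rstar :: "real \<Rightarrow> ('a::metric_space \<Rightarrow> real) \<Rightarrow> 'a set \<Rightarrow> 'a \<Rightarrow> real" where
  "Rstar \<beta> f A x = Sup ((\<lambda>(u, v). Rx \<beta> f x u v) ` adm_pairs A x)"

definition Wx :: "real \<Rightarrow> ('a::metric_space \<Rightarrow> real) \<Rightarrow> 'a set \<Rightarrow> 'a \<Rightarrow> real \<Rightarrow> ('a \<times> 'a) set" where
  "Wx \<beta> f A x \<epsilon> = {(u, v) \<in> adm_pairs A x. Rx \<beta> f x u v > Rstar \<beta> f A x - \<epsilon>}"

definition Phix :: "real \<Rightarrow> ('a::metric_space \<Rightarrow> real) \<Rightarrow> 'a set \<Rightarrow> 'a \<Rightarrow> real \<Rightarrow> real set" where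
  "Phix \<beta> f A x \<epsilon> = (\<lambda>(u, v). Fx \<beta> f x u v) ` Wx \<beta> f A x \<epsilon>"

definition pmse_limit :: "real \<Rightarrow> ('a::metric_space \<Rightarrow> real) \<Rightarrow> 'a set \<Rightarrow> 'a \<Rightarrow> real \<Rightarrow> bool" where
  "pmse_limit \<beta> f A x r \<longleftrightarrow>
     ((\<lambda>\<epsilon>. SUP \<phi> \<in> Phix \<beta> f A x \<epsilon>. ereal \<bar>\<phi> - r\<bar>) \<longlongrightarrow> 0) (at_right 0)"

definition const_on :: "('a \<Rightarrow> real) \<Rightarrow> 'a set \<Rightarrow> bool" where
  "const_on f A \<longleftrightarrow> (\<exists>c. \<forall>a\<in>A. f a = c)"

definition pmse_well_defined :: "real \<Rightarrow> ('a::metric_space \<Rightarrow> real) \<Rightarrow> 'a set \<Rightarrow> 'a \<Rightarrow> bool" where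
  "pmse_well_defined \<beta> f A x \<longleftrightarrow> const_on f A \<or> (\<exists>!r. pmse_limit \<beta> f A x r)"

definition pmse :: "real \<Rightarrow> ('a::metric_space \<Rightarrow> real) \<Rightarrow> 'a set \<Rightarrow> 'a \<Rightarrow> real" where
  "pmse \<beta> f A x =
     (if const_on f A then (THE c. \<forall>a\<in>A. f a = c) else (THE r. pmse_limit \<beta> f A x r))"

end

theory Submission
  imports Defs
begin

lemma powr_subadd:
  fixes a b \<beta> :: real
  assumes "0 \<le> a" "0 \<le> b" "0 < \<beta>" "\<beta> \<le> 1"
  shows "(a + b) powr \<beta> \<le> a powr \<beta> + b powr \<beta>"
proof (cases "a + b = 0")
  case True then show ?thesis using assms by simp
next
  case False
  hence s: "a + b > 0" using assms by simp
  have ta: "a / (a+b) \<le> (a/(a+b)) powr \<beta>"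
    using powr_mono'[of \<beta> 1 "a/(a+b)"] assms s by simp
  have tb: "b / (a+b) \<le> (b/(a+b)) powr \<beta>"
    using powr_mono'[of \<beta> 1 "b/(a+b)"] assms s by simp
  have "(a+b) powr \<beta> = (a+b) powr \<beta> * (a/(a+b) + b/(a+b))"
    using s by (simp add: add_divide_distrib[symmetric])
  also have "\<dots> \<le> (a+b) powr \<beta> * ((a/(a+b)) powr \<beta> + (b/(a+b)) powr \<beta>)"
    using ta tb by (intro mult_left_mono) auto
  also have "\<dots> = a powr \<beta> + b powr \<beta>"
    using s assms by (simp add: powr_divide distrib_left)
  finally show ?thesis .
qed

lemma dist_powr_tri:
  fixes x y z :: "'a::metric_space"
  assumes "0 < \<beta>" "\<beta> \<le> 1"
  shows "dist x z powr \<beta> \<le> dist x y powr \<beta> + dist y z powr \<beta>"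
proof -
  have "dist x z powr \<beta> \<le> (dist x y + dist y z) powr \<beta>"
    using assms by (intro powr_mono2) (auto intro: dist_triangle)
  also have "\<dots> \<le> dist x y powr \<beta> + dist y z powr \<beta>"
    using assms by (intro powr_subadd) auto
  finally show ?thesis .
qed


context
  fixes \<beta> :: real and f :: "'a::metric_space \<Rightarrow> real" and A :: "'a set" and L0 :: real
  assumes b0: "0 < \<beta>" and b1: "\<beta> \<le> 1" and f01: "\<forall>x. f x \<in> {0..1}"
    and L0: "0 \<le> L0" and hol: "\<forall>u\<in>A. \<forall>v\<in>A. u \<noteq> v \<longrightarrow> \<bar>f u - f v\<bar> \<le> L0 * dist u v powr \<beta>"
    and bA: "bounded A" and nc: "\<not> const_on f A"
begin

lemma other_point: "\<exists>w\<in>A. w \<noteq> x"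
  using nc unfolding const_on_def by (metis)

lemma denom_pos:
  assumes "(u, v) \<in> adm_pairs A x"
  shows "dist x v powr \<beta> + dist x u powr \<beta> > 0"
  using assms unfolding adm_pairs_def by (auto simp: add_pos_nonneg add_nonneg_pos)

lemma R_bound:
  assumes "(u, v) \<in> adm_pairs A x"
  shows "Rx \<beta> f x u v \<le> L0"
proof (cases "u = v")
  case True then show ?thesis using L0 by (simp add: Rx_def)
next
  case False
  have uv: "u \<in> A" "v \<in> A" using assms by (auto simp: adm_pairs_def)
  have "f v - f u \<le> L0 * dist u v powr \<beta>" using hol uv False by force
  also have "\<dots> \<le> L0 * (dist x v powr \<beta> + dist x u powr \<beta>)"
    using dist_powr_tri[OF b0 b1, where x=u and y=x and z=v] L0 by (intro mult_left_mono) (auto simp: dist_commute)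
  finally show ?thesis using denom_pos[OF assms] by (simp add: Rx_def divide_le_eq)
qed

lemma adm_ne: "adm_pairs A x \<noteq> {}"
  using other_point[of x] unfolding adm_pairs_def by auto

lemma bdd_R: "bdd_above ((\<lambda>(u, v). Rx \<beta> f x u v) ` adm_pairs A x)"
  using R_bound by (intro bdd_aboveI[of _ L0]) auto

lemma R_le_Rstar: "(u, v) \<in> adm_pairs A x \<Longrightarrow> Rx \<beta> f x u v \<le> Rstar \<beta> f A x"
  unfolding Rstar_def by (rule cSup_upper[OF _ bdd_R]) force

lemma Rstar_approx:
  assumes "\<epsilon> > 0"
  shows "\<exists>(u, v) \<in> adm_pairs A x. Rx \<beta> f x u v > Rstar \<beta> f A x - \<epsilon>"
proof -
  have "Rstar \<beta> f A x - \<epsilon> < Rstar \<beta> f A x" using assms by simp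
  then show ?thesis unfolding Rstar_def
    using less_cSup_iff[OF _ bdd_R] adm_ne by force
qed

lemma Rstar_nonneg: "0 \<le> Rstar \<beta> f A x"
proof -
  obtain w where w: "w \<in> A" "w \<noteq> x" using other_point by blast
  then have "(w, w) \<in> adm_pairs A x" by (auto simp: adm_pairs_def)
  from R_le_Rstar[OF this] show ?thesis by (simp add: Rx_def)
qed

lemma Rstar_le_L0: "Rstar \<beta> f A x \<le> L0"
  unfolding Rstar_def using adm_ne R_bound by (intro cSup_least) auto

lemma pair_ineq:
  assumes "v \<in> A" "w \<in> A"
  shows "f v - Rstar \<beta> f A x * dist x v powr \<beta> \<le> f w + Rstar \<beta> f A x * dist x w powr \<beta>"
proof (cases "(w, v) \<in> adm_pairs A x")
  case True
  have "Rx \<beta> f x w v \<le> Rstar \<beta> f A x" by (rule R_le_Rstar[OF True])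
  then have "f v - f w \<le> Rstar \<beta> f A x * (dist x v powr \<beta> + dist x w powr \<beta>)"
    using denom_pos[OF True] by (simp add: Rx_def divide_le_eq mult.commute)
  then show ?thesis by (simp add: algebra_simps)
next
  case False
  then have "w = x" "v = x" using assms by (auto simp: adm_pairs_def)
  then show ?thesis by simp
qed


definition "Lo x = Sup ((\<lambda>v. f v - Rstar \<beta> f A x * dist x v powr \<beta>) ` A)"
definition "Up x = Inf ((\<lambda>u. f u + Rstar \<beta> f A x * dist x u powr \<beta>) ` A)"

lemma A_ne: "A \<noteq> {}" using nc unfolding const_on_def by auto

lemma bdd_Lo: "bdd_above ((\<lambda>v. f v - Rstar \<beta> f A x * dist x v powr \<beta>) ` A)"
proof (rule bdd_aboveI[of _ 1])
  fix y assume "y \<in> (\<lambda>v. f v - Rstar \<beta> f A x * dist x v powr \<beta>) ` A"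
  then obtain v where "y = f v - Rstar \<beta> f A x * dist x v powr \<beta>" by auto
  moreover have "f v \<le> 1" using f01 by auto
  moreover have "0 \<le> Rstar \<beta> f A x * dist x v powr \<beta>" using Rstar_nonneg by simp
  ultimately show "y \<le> 1" by linarith
qed

lemma bdd_Up: "bdd_below ((\<lambda>u. f u + Rstar \<beta> f A x * dist x u powr \<beta>) ` A)"
proof (rule bdd_belowI[of _ 0])
  fix y assume "y \<in> (\<lambda>v. f v + Rstar \<beta> f A x * dist x v powr \<beta>) ` A"
  then obtain v where "y = f v + Rstar \<beta> f A x * dist x v powr \<beta>" by auto
  moreover have "f v \<ge> 0" using f01 by auto
  moreover have "0 \<le> Rstar \<beta> f A x * dist x v powr \<beta>" using Rstar_nonneg by simp
  ultimately show "0 \<le> y" by linarith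
qed

lemma Lo_ge: "v \<in> A \<Longrightarrow> f v - Rstar \<beta> f A x * dist x v powr \<beta> \<le> Lo x"
  unfolding Lo_def by (rule cSup_upper[OF _ bdd_Lo]) auto

lemma Up_le: "u \<in> A \<Longrightarrow> Up x \<le> f u + Rstar \<beta> f A x * dist x u powr \<beta>"
  unfolding Up_def by (rule cInf_lower[OF _ bdd_Up]) auto

lemma Lo_le_Up: "Lo x \<le> Up x"
  unfolding Lo_def using A_ne
  by (intro cSup_least) (auto simp: Up_def intro!: cInf_greatest pair_ineq)

lemma dist_bound: "\<exists>D\<ge>0. \<forall>u\<in>A. dist x u powr \<beta> \<le> D"
proof -
  obtain e where e: "\<forall>u\<in>A. dist x u \<le> e" using bA bounded_any_center by blast
  show ?thesis
    using e b0 by (intro exI[of _ "e powr \<beta>"]) (auto intro: powr_mono2)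
qed

lemma Up_le_Lo: "Up x \<le> Lo x"
proof -
  obtain D where D: "D \<ge> 0" "\<forall>u\<in>A. dist x u powr \<beta> \<le> D" using dist_bound by blast
  show ?thesis
  proof (rule field_le_epsilon)
    fix \<eta> :: real assume \<eta>: "0 < \<eta>"
    define \<epsilon> where "\<epsilon> = \<eta> / (2 * D + 1)"
    have \<epsilon>: "\<epsilon> > 0" using \<eta> D by (simp add: \<epsilon>_def)
    have \<epsilon>D: "2 * D * \<epsilon> \<le> \<eta>" using \<eta> D by (simp add: \<epsilon>_def field_simps)
    obtain u v where uv: "(u, v) \<in> adm_pairs A x" "Rx \<beta> f x u v > Rstar \<beta> f A x - \<epsilon>"
      using Rstar_approx[OF \<epsilon>, where x=x] by auto
    have uA: "u \<in> A" "v \<in> A" using uv by (auto simp: adm_pairs_def)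
    define du where "du = dist x u powr \<beta>"
    define dv where "dv = dist x v powr \<beta>"
    have pos: "dv + du > 0" using denom_pos[OF uv(1)] by (simp add: du_def dv_def)
    have eq: "f v - f u = Rx \<beta> f x u v * (dv + du)" using pos by (simp add: Rx_def du_def dv_def)
    have "(Rstar \<beta> f A x - \<epsilon>) * (dv + du) \<le> Rx \<beta> f x u v * (dv + du)"
      using uv(2) pos by (intro mult_right_mono) auto
    hence ineq: "f u - f v + Rstar \<beta> f A x * (du + dv) \<le> \<epsilon> * (du + dv)"
      using eq by (simp add: algebra_simps)
    have "\<epsilon> * (du + dv) \<le> \<epsilon> * (2 * D)"
    proof (rule mult_left_mono)
      have "du \<le> D" "dv \<le> D" using D uA by (auto simp: du_def dv_def)
      then show "du + dv \<le> 2 * D" by simp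
    qed (use \<epsilon> in simp)
    moreover have "Up x \<le> f u + Rstar \<beta> f A x * du" using Up_le[OF uA(1)] by (simp add: du_def)
    moreover have "f v - Rstar \<beta> f A x * dv \<le> Lo x" using Lo_ge[OF uA(2)] by (simp add: dv_def)
    ultimately show "Up x \<le> Lo x + \<eta>" using ineq \<epsilon>D by (simp add: algebra_simps)
  qed
qed

lemma Lo_eq_Up: "Lo x = Up x" using Lo_le_Up Up_le_Lo by (rule antisym)

lemma Phix_close:
  assumes D: "D \<ge> 0" "\<forall>u\<in>A. dist x u powr \<beta> \<le> D" and \<epsilon>: "\<epsilon> > 0"
    and \<phi>: "\<phi> \<in> Phix \<beta> f A x \<epsilon>"
  shows "\<bar>\<phi> - Lo x\<bar> \<le> \<epsilon> * D"
proof -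
  obtain u v where uv: "(u, v) \<in> adm_pairs A x" "Rx \<beta> f x u v > Rstar \<beta> f A x - \<epsilon>"
    and \<phi>eq: "\<phi> = Fx \<beta> f x u v"
    using \<phi> by (auto simp: Phix_def Wx_def)
  have uA: "u \<in> A" "v \<in> A" using uv by (auto simp: adm_pairs_def)
  define du where "du = dist x u powr \<beta>"
  define dv where "dv = dist x v powr \<beta>"
  have pos: "dv + du > 0" using denom_pos[OF uv(1)] by (simp add: du_def dv_def)
  have eq: "f v - f u = Rx \<beta> f x u v * (dv + du)" using pos by (simp add: Rx_def du_def dv_def)
  have F1: "\<phi> = f u + Rx \<beta> f x u v * du" by (simp add: \<phi>eq Fx_def du_def)
  have F2: "\<phi> = f v - Rx \<beta> f x u v * dv" using F1 eq by (simp add: algebra_simps)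
  have du0: "du \<ge> 0" "dv \<ge> 0" by (auto simp: du_def dv_def)
  have a: "(Rstar \<beta> f A x - \<epsilon>) * du \<le> Rx \<beta> f x u v * du"
    using uv(2) du0 by (intro mult_right_mono) auto
  have b: "(Rstar \<beta> f A x - \<epsilon>) * dv \<le> Rx \<beta> f x u v * dv"
    using uv(2) du0 by (intro mult_right_mono) auto
  have c: "\<epsilon> * du \<le> \<epsilon> * D" "\<epsilon> * dv \<le> \<epsilon> * D"
    using D uA \<epsilon> by (auto intro!: mult_left_mono simp: du_def dv_def)
  have "Up x \<le> f u + Rstar \<beta> f A x * du" using Up_le[OF uA(1)] by (simp add: du_def)
  moreover have "f v - Rstar \<beta> f A x * dv \<le> Lo x" using Lo_ge[OF uA(2)] by (simp add: dv_def)
  ultimately show ?thesis using F1 F2 a b c Lo_eq_Up by (simp add: algebra_simps abs_le_iff)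
qed

lemma Phix_ne: "\<epsilon> > 0 \<Longrightarrow> Phix \<beta> f A x \<epsilon> \<noteq> {}"
  using Rstar_approx[of \<epsilon> x] by (auto simp: Phix_def Wx_def)

lemma limit_Lo: "pmse_limit \<beta> f A x (Lo x)"
proof -
  obtain D where D: "D \<ge> 0" "\<forall>u\<in>A. dist x u powr \<beta> \<le> D" using dist_bound by blast
  let ?g = "\<lambda>\<epsilon>. SUP \<phi> \<in> Phix \<beta> f A x \<epsilon>. ereal \<bar>\<phi> - Lo x\<bar>"
  have up: "?g \<epsilon> \<le> ereal (\<epsilon> * D)" if "\<epsilon> > 0" for \<epsilon>
    using Phix_close[OF D that] by (intro SUP_least) auto
  have lo: "0 \<le> ?g \<epsilon>" if pe: "\<epsilon> > 0" for \<epsilon>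
  proof -
    obtain \<phi> where "\<phi> \<in> Phix \<beta> f A x \<epsilon>" using Phix_ne[OF pe] by blast
    then have "ereal \<bar>\<phi> - Lo x\<bar> \<le> ?g \<epsilon>" by (rule SUP_upper)
    then show ?thesis by (rule order_trans[rotated]) simp
  qed
  have t: "((\<lambda>\<epsilon>. ereal (\<epsilon> * D)) \<longlongrightarrow> 0) (at_right 0)"
  proof -
    have "((\<lambda>\<epsilon>::real. \<epsilon> * D) \<longlongrightarrow> 0 * D) (at_right 0)"
      by (intro tendsto_intros)
    then show ?thesis by (simp add: zero_ereal_def)
  qed
  show ?thesis unfolding pmse_limit_def
    by (rule tendsto_sandwich[OF _ _ tendsto_const t])
       (auto intro: eventually_mono[OF eventually_at_right_less] lo up)
qed

lemma limit_unique:
  assumes "pmse_limit \<beta> f A x r1" "pmse_limit \<beta> f A x r2"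
  shows "r1 = r2"
proof (rule ccontr)
  assume ne: "r1 \<noteq> r2"
  define \<delta> where "\<delta> = \<bar>r1 - r2\<bar> / 2"
  have \<delta>: "\<delta> > 0" using ne by (simp add: \<delta>_def)
  have e1: "\<forall>\<^sub>F \<epsilon> in at_right 0. (SUP \<phi> \<in> Phix \<beta> f A x \<epsilon>. ereal \<bar>\<phi> - r1\<bar>) < ereal \<delta>"
    using assms(1) \<delta> unfolding pmse_limit_def by (intro order_tendstoD(2)) auto
  have e2: "\<forall>\<^sub>F \<epsilon> in at_right 0. (SUP \<phi> \<in> Phix \<beta> f A x \<epsilon>. ereal \<bar>\<phi> - r2\<bar>) < ereal \<delta>"
    using assms(2) \<delta> unfolding pmse_limit_def by (intro order_tendstoD(2)) auto
  obtain \<epsilon> :: real where \<epsilon>: "\<epsilon> > 0"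
      "(SUP \<phi> \<in> Phix \<beta> f A x \<epsilon>. ereal \<bar>\<phi> - r1\<bar>) < ereal \<delta>"
      "(SUP \<phi> \<in> Phix \<beta> f A x \<epsilon>. ereal \<bar>\<phi> - r2\<bar>) < ereal \<delta>"
    using eventually_happens'[OF _ eventually_conj[OF eventually_at_right_less eventually_conj[OF e1 e2]]]
    by auto
  obtain \<phi> where \<phi>: "\<phi> \<in> Phix \<beta> f A x \<epsilon>" using Phix_ne[OF \<epsilon>(1)] by blast
  have "ereal \<bar>\<phi> - r1\<bar> < ereal \<delta>" using SUP_upper[OF \<phi>] \<epsilon>(2) by (rule le_less_trans)
  moreover have "ereal \<bar>\<phi> - r2\<bar> < ereal \<delta>" using SUP_upper[OF \<phi>] \<epsilon>(3) by (rule le_less_trans)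
  ultimately have "\<bar>\<phi> - r1\<bar> < \<delta>" "\<bar>\<phi> - r2\<bar> < \<delta>" by auto
  then show False unfolding \<delta>_def by (simp add: abs_if split: if_splits)
qed

lemma pmse_eq: "pmse \<beta> f A x = Lo x"
  unfolding pmse_def using nc limit_Lo limit_unique by (auto intro!: the_equality)

lemma wd: "pmse_well_defined \<beta> f A x"
  unfolding pmse_well_defined_def using limit_Lo limit_unique by blast


lemma pmse_range: "pmse \<beta> f A x \<in> {0..1}"
proof -
  have "Lo x \<le> 1" unfolding Lo_def
  proof (rule cSup_least)
    show "(\<lambda>v. f v - Rstar \<beta> f A x * dist x v powr \<beta>) ` A \<noteq> {}" using A_ne by simp
  next
    fix y assume "y \<in> (\<lambda>v. f v - Rstar \<beta> f A x * dist x v powr \<beta>) ` A"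
    then obtain v where "y = f v - Rstar \<beta> f A x * dist x v powr \<beta>" by auto
    moreover have "f v \<le> 1" using f01 by auto
    moreover have "0 \<le> Rstar \<beta> f A x * dist x v powr \<beta>" using Rstar_nonneg by simp
    ultimately show "y \<le> 1" by linarith
  qed
  moreover have "0 \<le> Up x" unfolding Up_def
  proof (rule cInf_greatest)
    show "(\<lambda>v. f v + Rstar \<beta> f A x * dist x v powr \<beta>) ` A \<noteq> {}" using A_ne by simp
  next
    fix y assume "y \<in> (\<lambda>v. f v + Rstar \<beta> f A x * dist x v powr \<beta>) ` A"
    then obtain v where "y = f v + Rstar \<beta> f A x * dist x v powr \<beta>" by auto
    moreover have "f v \<ge> 0" using f01 by auto
    moreover have "0 \<le> Rstar \<beta> f A x * dist x v powr \<beta>" using Rstar_nonneg by simp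
    ultimately show "0 \<le> y" by linarith
  qed
  ultimately show ?thesis using pmse_eq Lo_eq_Up by auto
qed

lemma P1: "w \<in> A \<Longrightarrow> f w - Rstar \<beta> f A x * dist x w powr \<beta> \<le> pmse \<beta> f A x
   \<and> pmse \<beta> f A x \<le> f w + Rstar \<beta> f A x * dist x w powr \<beta>"
  using Lo_ge Up_le pmse_eq Lo_eq_Up by metis

lemma P2: "\<eta> > 0 \<Longrightarrow> \<exists>v\<in>A. pmse \<beta> f A x < f v - Rstar \<beta> f A x * dist x v powr \<beta> + \<eta>"
proof -
  assume "\<eta> > 0"
  then have "Lo x - \<eta> < Lo x" by simp
  then obtain v where "v \<in> A" "Lo x - \<eta> < f v - Rstar \<beta> f A x * dist x v powr \<beta>"
    using less_cSup_iff[OF _ bdd_Lo[of x]] A_ne unfolding Lo_def by force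
  then show ?thesis using pmse_eq by (intro bexI[of _ v]) auto
qed

lemma P3: "\<eta> > 0 \<Longrightarrow> \<exists>u\<in>A. f u + Rstar \<beta> f A x * dist x u powr \<beta> - \<eta> < pmse \<beta> f A x"
proof -
  assume "\<eta> > 0"
  then have "Up x < Up x + \<eta>" by simp
  then have "\<exists>z\<in>(\<lambda>u. f u + Rstar \<beta> f A x * dist x u powr \<beta>) ` A. z < Up x + \<eta>"
    unfolding Up_def using cInf_less_iff[OF _ bdd_Up[of x]] A_ne by blast
  then obtain u where "u \<in> A" "f u + Rstar \<beta> f A x * dist x u powr \<beta> < Up x + \<eta>"
    by blast
  then show ?thesis using pmse_eq Lo_eq_Up by (intro bexI[of _ u]) auto
qed

lemma slope_half:
  assumes "Rstar \<beta> f A x \<le> Rstar \<beta> f A y"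
  shows "\<bar>pmse \<beta> f A x - pmse \<beta> f A y\<bar> \<le> Rstar \<beta> f A x * dist x y powr \<beta>"
proof -
  let ?F = "pmse \<beta> f A" and ?Rx = "Rstar \<beta> f A x" and ?Ry = "Rstar \<beta> f A y"
  let ?dd = "dist x y powr \<beta>"
  have Rx0: "0 \<le> ?Rx" by (rule Rstar_nonneg)
  have "?F y - ?F x \<le> ?Rx * ?dd"
  proof (rule field_le_epsilon)
    fix \<eta> :: real assume \<eta>: "\<eta> > 0"
    obtain v where v: "v \<in> A" "?F y < f v - ?Ry * dist y v powr \<beta> + \<eta>" using P2[OF \<eta>] by blast
    have a: "?Rx * dist y v powr \<beta> \<le> ?Ry * dist y v powr \<beta>"
      using assms by (intro mult_right_mono) auto
    have "dist x v powr \<beta> \<le> ?dd + dist y v powr \<beta>" by (rule dist_powr_tri[OF b0 b1])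
    then have b: "?Rx * dist x v powr \<beta> \<le> ?Rx * (?dd + dist y v powr \<beta>)"
      using Rx0 by (intro mult_left_mono) auto
    have c: "f v - ?Rx * dist x v powr \<beta> \<le> ?F x" using P1[OF v(1)] by blast
    show "?F y - ?F x \<le> ?Rx * ?dd + \<eta>" using v(2) a b c by (simp add: algebra_simps)
  qed
  moreover have "?F x - ?F y \<le> ?Rx * ?dd"
  proof (rule field_le_epsilon)
    fix \<eta> :: real assume \<eta>: "\<eta> > 0"
    obtain u where u: "u \<in> A" "f u + ?Ry * dist y u powr \<beta> - \<eta> < ?F y" using P3[OF \<eta>] by blast
    have a: "?Rx * dist y u powr \<beta> \<le> ?Ry * dist y u powr \<beta>"
      using assms by (intro mult_right_mono) auto
    have "dist x u powr \<beta> \<le> ?dd + dist y u powr \<beta>" by (rule dist_powr_tri[OF b0 b1])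
    then have b: "?Rx * dist x u powr \<beta> \<le> ?Rx * (?dd + dist y u powr \<beta>)"
      using Rx0 by (intro mult_left_mono) auto
    have c: "?F x \<le> f u + ?Rx * dist x u powr \<beta>" using P1[OF u(1)] by blast
    show "?F x - ?F y \<le> ?Rx * ?dd + \<eta>" using u(2) a b c by (simp add: algebra_simps)
  qed
  ultimately show ?thesis by (simp add: abs_le_iff)
qed

lemma slope_pt: "\<bar>pmse \<beta> f A x - pmse \<beta> f A y\<bar> \<le> Rstar \<beta> f A x * dist x y powr \<beta>"
proof (cases "Rstar \<beta> f A x \<le> Rstar \<beta> f A y")
  case True then show ?thesis by (rule slope_half)
next
  case False
  then have "\<bar>pmse \<beta> f A y - pmse \<beta> f A x\<bar> \<le> Rstar \<beta> f A y * dist y x powr \<beta>"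
    by (intro slope_half) auto
  also have "\<dots> \<le> Rstar \<beta> f A x * dist x y powr \<beta>"
    using False by (simp add: dist_commute mult_right_mono)
  finally show ?thesis by (simp add: abs_minus_commute)
qed

lemma Rstar_le_hslope: "ereal (Rstar \<beta> f A x) \<le> hslope \<beta> f x"
proof -
  obtain w where w: "w \<in> A" "w \<noteq> x" using other_point by blast
  have hw: "ereal (\<bar>f x - f w\<bar> / dist x w powr \<beta>) \<le> hslope \<beta> f x"
    unfolding hslope_def using w by (intro SUP_upper) auto
  show ?thesis
  proof (cases "hslope \<beta> f x")
    case (real lam)
    have lam0: "0 \<le> lam" using hw real by (metis ereal_less_eq(3) divide_nonneg_nonneg abs_ge_zero powr_ge_zero order_trans)
    have fx: "\<bar>f x - f y\<bar> \<le> lam * dist x y powr \<beta>" for y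
    proof (cases "y = x")
      case True then show ?thesis by simp
    next
      case False
      have "ereal (\<bar>f x - f y\<bar> / dist x y powr \<beta>) \<le> hslope \<beta> f x"
        unfolding hslope_def using False by (intro SUP_upper) auto
      then have "\<bar>f x - f y\<bar> / dist x y powr \<beta> \<le> lam" using real by simp
      moreover have "dist x y powr \<beta> > 0" using False by simp
      ultimately show ?thesis by (simp add: divide_le_eq)
    qed
    have "Rstar \<beta> f A x \<le> lam" unfolding Rstar_def
    proof (rule cSup_least)
      show "(\<lambda>(u, v). Rx \<beta> f x u v) ` adm_pairs A x \<noteq> {}" using adm_ne by simp
    next
      fix r assume "r \<in> (\<lambda>(u, v). Rx \<beta> f x u v) ` adm_pairs A x"
      then obtain u v where uv: "(u, v) \<in> adm_pairs A x" "r = Rx \<beta> f x u v" by auto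
      have "f v - f u \<le> \<bar>f x - f v\<bar> + \<bar>f x - f u\<bar>" by simp
      also have "\<dots> \<le> lam * (dist x v powr \<beta> + dist x u powr \<beta>)"
        using fx[of u] fx[of v] by (simp add: distrib_left)
      finally show "r \<le> lam" using uv denom_pos[OF uv(1)] by (simp add: Rx_def divide_le_eq mult.commute)
    qed
    then show ?thesis using real by simp
  next
    case PInf then show ?thesis by simp
  next
    case MInf then show ?thesis using hw by simp
  qed
qed

lemma hslope_ok: "hslope \<beta> (pmse \<beta> f A) x \<le> hslope \<beta> f x"
proof -
  have "hslope \<beta> (pmse \<beta> f A) x \<le> ereal (Rstar \<beta> f A x)"
    unfolding hslope_def
  proof (rule SUP_least)
    fix y assume "y \<in> UNIV - {x}"
    then have p: "dist x y powr \<beta> > 0" by simp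
    have "\<bar>pmse \<beta> f A x - pmse \<beta> f A y\<bar> / dist x y powr \<beta> \<le> Rstar \<beta> f A x"
      using slope_pt p by (simp add: divide_le_eq)
    then show "ereal (\<bar>pmse \<beta> f A x - pmse \<beta> f A y\<bar> / dist x y powr \<beta>) \<le> ereal (Rstar \<beta> f A x)"
      by simp
  qed
  also have "\<dots> \<le> hslope \<beta> f x" by (rule Rstar_le_hslope)
  finally show ?thesis .
qed
end

theorem theorem8:
  fixes f :: "'a::metric_space \<Rightarrow> real" and A :: "'a set" and \<beta> :: real
  assumes "0 < \<beta>" and "\<beta> \<le> 1" and "A \<noteq> {}"
    and "\<forall>x. f x \<in> {0..1}"
    and "\<exists>L. \<forall>u\<in>A. \<forall>v\<in>A. u \<noteq> v \<longrightarrow> \<bar>f u - f v\<bar> / dist u v powr \<beta> \<le> L"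
    and "bounded A"
  shows "(\<forall>x. pmse_well_defined \<beta> f A x)
       \<and> (\<forall>x. pmse \<beta> f A x \<in> {0..1})
       \<and> (\<forall>x. hslope \<beta> (pmse \<beta> f A) x \<le> hslope \<beta> f x)"
proof (cases "const_on f A")
  case True
  obtain a0 where a0: "a0 \<in> A" using assms(3) by blast
  then obtain c where c: "\<forall>a\<in>A. f a = c" using True unfolding const_on_def by blast
  have the: "(THE c. \<forall>a\<in>A. f a = c) = f a0"
    using c a0 by (intro the_equality) auto
  have P: "pmse \<beta> f A x = f a0" for x unfolding pmse_def using True the by simp
  have hs: "hslope \<beta> (pmse \<beta> f A) x \<le> hslope \<beta> f x" for x
    unfolding hslope_def P
  proof (rule SUP_least)
    fix y assume y: "y \<in> UNIV - {x}"
    have "ereal (\<bar>f a0 - f a0\<bar> / dist x y powr \<beta>) \<le> ereal (\<bar>f x - f y\<bar> / dist x y powr \<beta>)"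
      by simp
    also have "\<dots> \<le> (SUP y\<in>UNIV - {x}. ereal (\<bar>f x - f y\<bar> / dist x y powr \<beta>))"
      using y by (rule SUP_upper)
    finally show "ereal (\<bar>f a0 - f a0\<bar> / dist x y powr \<beta>) \<le> (SUP y\<in>UNIV - {x}. ereal (\<bar>f x - f y\<bar> / dist x y powr \<beta>))" .
  qed
  show ?thesis
    using True P hs assms(4) unfolding pmse_well_defined_def by auto
next
  case False
  obtain L where L: "\<forall>u\<in>A. \<forall>v\<in>A. u \<noteq> v \<longrightarrow> \<bar>f u - f v\<bar> / dist u v powr \<beta> \<le> L"
    using assms(5) by blast
  define L0 where "L0 = max L 0"
  have L0: "0 \<le> L0" by (simp add: L0_def)
  have hol: "\<forall>u\<in>A. \<forall>v\<in>A. u \<noteq> v \<longrightarrow> \<bar>f u - f v\<bar> \<le> L0 * dist u v powr \<beta>"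
  proof (intro ballI impI)
    fix u v assume uv: "u \<in> A" "v \<in> A" "u \<noteq> v"
    then have p: "dist u v powr \<beta> > 0" by simp
    have "\<bar>f u - f v\<bar> / dist u v powr \<beta> \<le> L0" using L uv by (force simp: L0_def)
    then show "\<bar>f u - f v\<bar> \<le> L0 * dist u v powr \<beta>" using p by (simp add: divide_le_eq mult.commute)
  qed
  note ctx = assms(1) assms(2) assms(4) L0 hol assms(6) False
  show ?thesis
    using wd[OF ctx] pmse_range[OF ctx] hslope_ok[OF ctx] by blast
qed

end
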